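(* Let $\alpha\in(0,2]$ and $\nu>0$. Let $X_1,X_2,\ldots$ and $N_1,N_2,\ldots$ be random variables on a common probability space such that each $N_n$ takes only natural values, is independent of $X_1,X_2,\ldots$, and $N_n\to\infty$ in probability. Let $T_n=T_n(X_1,\ldots,X_n)$ be a statistic (a measurable function of $X_1,\ldots,X_n$) that is asymptotically normal, i.e. there exist $\sigma>0$ and $\theta\in\mathbb{R}$ with $$\mathsf{P}\big(\sigma\sqrt{n}(T_n-\theta)<x\big)\to\Phi(x)\quad\text{for all }x\in\mathbb{R},$$ and let $T_{N_n}(\omega)=T_{N_n(\omega)}(X_1(\omega),\ldots,X_{N_n(\omega)}(\omega))$. Then $$\sigma\sqrt{n}\big(T_{N_n}-\theta\big)\Longrightarrow L_{\alpha,\nu}$$ if and only if $$\frac{N_n}{n}\Longrightarrow \tfrac12 M_{\alpha/2,\nu}^{-1}.$$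
   Context: $\Longrightarrow$ denotes convergence in distribution as $n\to\infty$; $\Phi$ is the standard normal distribution function. $L_{\alpha,\nu}$ denotes a random variable with characteristic function $(1+|t|^{\alpha})^{-\nu}$, $t\in\mathbb{R}$. For $\delta\in(0,1]$, $\nu>0$, $M_{\delta,\nu}$ denotes a nonnegative random variable with Laplace transform $(1+s^{\delta})^{-\nu}$, $s\ge0$ (generalized Mittag-Leffler distribution). *)

theory Defs
  imports "HOL-Probability.Probability"
begin

definition std_normal_cdf :: "real \<Rightarrow> real" where
  "std_normal_cdf x = measure (density lborel std_normal_density) {..x}"

definition is_linnik_law :: "real \<Rightarrow> real \<Rightarrow> real measure \<Rightarrow> bool" where
  "is_linnik_law \<alpha> \<nu> L \<longleftrightarrow> real_distribution L \<and>
     (\<forall>t. char L t = complex_of_real ((1 + \<bar>t\<bar> powr \<alpha>) powr (- \<nu>)))"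

definition is_gml_law :: "real \<Rightarrow> real \<Rightarrow> real measure \<Rightarrow> bool" where
  "is_gml_law \<delta> \<nu> G \<longleftrightarrow> real_distribution G \<and> (AE x in G. 0 \<le> x) \<and>
     (\<forall>s\<ge>0. (\<integral>x. exp (- s * x) \<partial>G) = (1 + s powr \<delta>) powr (- \<nu>))"

end

theory Submission
  imports Defs
begin


lemma polya_unif:
  fixes F :: "nat \<Rightarrow> real \<Rightarrow> real" and P :: "real \<Rightarrow> real"
  assumes monoF: "\<And>k. mono (F k)" and bndF: "\<And>k y. 0 \<le> F k y \<and> F k y \<le> 1"
    and contP: "\<And>y. isCont P y" and monoP: "mono P" and bndP: "\<And>y. 0 \<le> P y \<and> P y \<le> 1"
    and bot: "(P \<longlongrightarrow> 0) at_bot" and top: "(P \<longlongrightarrow> 1) at_top"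
    and conv: "\<And>y. (\<lambda>k. F k y) \<longlonglongrightarrow> P y" and e: "e > 0"
  shows "\<exists>K. \<forall>k\<ge>K. \<forall>y. \<bar>F k y - P y\<bar> < e"
proof -
  have e2: "e/2 > 0" using e by simp
  from order_tendstoD(2)[OF bot e2] obtain a where a: "\<And>y. y \<le> a \<Longrightarrow> P y < e/2"
    unfolding eventually_at_bot_linorder by blast
  have "1 - e/2 < 1" using e by simp
  from order_tendstoD(1)[OF top this] obtain b0 where b0: "\<And>y. y \<ge> b0 \<Longrightarrow> P y > 1 - e/2"
    unfolding eventually_at_top_linorder by blast
  define b where "b = max b0 (a+1)"
  have ab: "a < b" and b: "\<And>y. y \<ge> b \<Longrightarrow> P y > 1 - e/2" using b0 by (auto simp: b_def)
  have "uniformly_continuous_on {a..b} P"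
    by (rule compact_uniformly_continuous) (auto intro: continuous_at_imp_continuous_on contP)
  then obtain d where d: "d > 0" and
    dP: "\<And>x x'. x \<in> {a..b} \<Longrightarrow> x' \<in> {a..b} \<Longrightarrow> dist x' x < d \<Longrightarrow> dist (P x') (P x) < e/2"
    unfolding uniformly_continuous_on_def using e2 by metis
  define h where "h = d/2"
  have h: "h > 0" "h < d" using d by (auto simp: h_def)
  define p where "p j = min b (a + real j * h)" for j :: nat
  define m where "m = nat \<lceil>(b-a)/h\<rceil> + 1"
  have pm: "p m = b"
  proof -
    have "(b-a)/h \<le> real m" unfolding m_def by linarith
    then have "b - a \<le> real m * h" using h by (simp add: field_simps)
    then show ?thesis unfolding p_def by simp
  qed
  have p0: "p 0 = a" using ab by (simp add: p_def)
  have "\<forall>\<^sub>F k in sequentially. \<forall>j\<in>{..m}. \<bar>F k (p j) - P (p j)\<bar> < e/2"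
  proof (rule eventually_ball_finite)
    show "finite {..m}" by simp
    show "\<forall>j\<in>{..m}. \<forall>\<^sub>F k in sequentially. \<bar>F k (p j) - P (p j)\<bar> < e/2"
    proof
      fix j
      have "(\<lambda>k. F k (p j) - P (p j)) \<longlonglongrightarrow> 0" using conv[of "p j"]
        by (simp add: LIM_zero)
      then show "\<forall>\<^sub>F k in sequentially. \<bar>F k (p j) - P (p j)\<bar> < e/2"
        using e2 unfolding tendsto_iff dist_real_def by (auto elim!: allE[where x="e/2"])
    qed
  qed
  then obtain K where K: "\<And>k j. k \<ge> K \<Longrightarrow> j \<le> m \<Longrightarrow> \<bar>F k (p j) - P (p j)\<bar> < e/2"
    unfolding eventually_sequentially by blast
  have "\<forall>k\<ge>K. \<forall>y. \<bar>F k y - P y\<bar> < e"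
  proof (intro allI impI)
    fix k y assume k: "k \<ge> K"
    show "\<bar>F k y - P y\<bar> < e"
    proof (cases "y < a")
      case True
      have "F k y \<le> F k a" using monoF[of k] True by (simp add: mono_def)
      moreover have "\<bar>F k a - P a\<bar> < e/2" using K[OF k, of 0] p0 by simp
      moreover have "P a < e/2" using a by simp
      moreover have "P y < e/2" using a True by simp
      ultimately show ?thesis using bndP[of y] bndF[of k y] by linarith
    next
      case False
      show ?thesis
      proof (cases "y > b")
        case True
        have "F k b \<le> F k y" using monoF[of k] True by (simp add: mono_def)
        moreover have "\<bar>F k b - P b\<bar> < e/2" using K[OF k, of m] pm by simp
        moreover have "P b > 1 - e/2" using b by simp
        moreover have "P y > 1 - e/2" using b True by simp
        ultimately show ?thesis using bndP[of y] bndF[of k y] by linarith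
      next
        case False2: False
        define j where "j = nat \<lfloor>(y-a)/h\<rfloor>"
        have ya: "y \<ge> a" "y \<le> b" using False False2 by auto
        have q0: "(y-a)/h \<ge> 0" using ya h by simp
        have fl: "real j = of_int \<lfloor>(y-a)/h\<rfloor>" unfolding j_def using q0 by simp
        have j1: "real j \<le> (y-a)/h" "(y-a)/h < real j + 1" unfolding fl by linarith+
        have "real j * h \<le> y - a" using j1 h by (simp add: field_simps)
        then have pj: "p j \<le> y" "p j \<ge> a" "y - p j < d" using j1 h ya
          by (auto simp: p_def field_simps)
        have "y - a < (real j + 1) * h" using j1 h by (simp add: field_simps)
        then have pj1: "p (Suc j) \<ge> y" "p (Suc j) \<le> b" "p (Suc j) - y < d" using h ya \<open>real j * h \<le> y - a\<close>
          by (auto simp: p_def field_simps)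
        have jm: "Suc j \<le> m"
        proof -
          have "(y-a)/h \<le> (b-a)/h" using ya h by (simp add: divide_right_mono)
          then have "real j \<le> (b-a)/h" using j1 by linarith
          then have "real j < real m" unfolding m_def by linarith
          then show ?thesis by simp
        qed
        have "F k (p j) \<le> F k y" "F k y \<le> F k (p (Suc j))"
          using monoF[of k] pj pj1 by (auto simp: mono_def)
        moreover have "\<bar>F k (p j) - P (p j)\<bar> < e/2" "\<bar>F k (p (Suc j)) - P (p (Suc j))\<bar> < e/2"
          using K[OF k] jm by auto
        moreover have "dist (P (p j)) (P y) < e/2"
          by (rule dP) (use pj pj1 ya in \<open>auto simp: dist_real_def\<close>)
        moreover have "dist (P (p (Suc j))) (P y) < e/2"
          by (rule dP) (use pj pj1 ya in \<open>auto simp: dist_real_def\<close>)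
        ultimately show ?thesis unfolding dist_real_def abs_less_iff by linarith
      qed
    qed
  qed
  then show ?thesis by blast
qed


abbreviation "SN \<equiv> std_normal_distribution"

interpretation snd0: real_distribution SN by (rule real_dist_normal_dist)

lemma Phi_cdf: "std_normal_cdf x = cdf SN x"
  using cdf_def2 by (simp add: std_normal_cdf_def)

lemma Phi_atom: "measure SN {x} = 0"
proof -
  have "emeasure SN {x} = (\<integral>\<^sup>+ y. ennreal (std_normal_density y) * indicator {x} y \<partial>lborel)"
    by (subst emeasure_density) auto
  also have "\<dots> = 0" by (rule nn_integral_null_set) auto
  finally show ?thesis by (simp add: measure_def)
qed

lemma Phi_isCont: "isCont std_normal_cdf x"
proof -
  have "std_normal_cdf = cdf SN" using Phi_cdf by auto
  then show ?thesis using snd0.isCont_cdf Phi_atom by simp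
qed

lemma Phi_mono: "mono std_normal_cdf"
  unfolding Phi_cdf[abs_def] mono_def using snd0.cdf_nondecreasing by blast

lemma Phi_bnd: "0 \<le> std_normal_cdf x \<and> std_normal_cdf x \<le> 1"
  unfolding Phi_cdf using snd0.cdf_nonneg
    snd0.cdf_bounded_prob by blast

lemma Phi_bot: "(std_normal_cdf \<longlongrightarrow> 0) at_bot"
  unfolding Phi_cdf[abs_def] using snd0.cdf_lim_at_bot by simp

lemma Phi_top: "(std_normal_cdf \<longlongrightarrow> 1) at_top"
  unfolding Phi_cdf[abs_def] using snd0.cdf_lim_at_top_prob by simp

lemma Phi_meas[measurable]: "std_normal_cdf \<in> borel_measurable borel"
  by (intro borel_measurable_continuous_onI continuous_at_imp_continuous_on) (auto intro: Phi_isCont)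

definition mixr :: "real \<Rightarrow> real" where "mixr u = (if 0 < u then 1 / sqrt u else 0)"

lemma mixr_meas[measurable]: "mixr \<in> borel_measurable borel"
  unfolding mixr_def by measurable

definition Mix :: "real measure \<Rightarrow> real measure" where
  "Mix \<mu> = distr (\<mu> \<Otimes>\<^sub>M SN) borel (\<lambda>(u,z). z * mixr u)"

definition mixc :: "real \<Rightarrow> real \<Rightarrow> real" where
  "mixc x u = (if 0 < u then std_normal_cdf (x * sqrt u) else (if 0 \<le> x then 1 else 0))"

lemma mixc_meas[measurable]: "mixc x \<in> borel_measurable borel"
  unfolding mixc_def by measurable

lemma mixc_bnd: "0 \<le> mixc x u \<and> mixc x u \<le> 1"
  using Phi_bnd by (auto simp: mixc_def)

lemma Mix_real_distribution:
  assumes "real_distribution \<mu>" shows "real_distribution (Mix \<mu>)"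
proof -
  interpret mu: real_distribution \<mu> by fact
  interpret sn: real_distribution SN by (rule real_dist_normal_dist)
  interpret pp: pair_prob_space \<mu> SN ..
  have "prob_space (Mix \<mu>)" unfolding Mix_def
    by (rule pp.prob_space_distr) (simp add: measurable_split_conv)
  then show ?thesis by (auto simp: real_distribution_def real_distribution_axioms_def Mix_def)
qed

lemma Mix_cdf:
  assumes "real_distribution \<mu>" shows "cdf (Mix \<mu>) x = (\<integral>u. mixc x u \<partial>\<mu>)"
proof -
  interpret mu: real_distribution \<mu> by fact
  interpret sn: real_distribution SN by (rule real_dist_normal_dist)
  interpret pp: pair_prob_space \<mu> SN ..
  have sets_mu[simp]: "sets \<mu> = sets borel" by simp
  let ?X = "{p \<in> space (\<mu> \<Otimes>\<^sub>M SN). snd p * mixr (fst p) \<le> x}"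
  have Xm: "?X \<in> sets (\<mu> \<Otimes>\<^sub>M SN)" by measurable
  have "cdf (Mix \<mu>) x = measure (Mix \<mu>) {..x}"
    by (rule cdf_def2)
  also have "\<dots> = measure (\<mu> \<Otimes>\<^sub>M SN) ((\<lambda>(u,z). z * mixr u) -` {..x} \<inter> space (\<mu> \<Otimes>\<^sub>M SN))"
    unfolding Mix_def by (rule measure_distr) (auto simp: measurable_split_conv)
  also have "(\<lambda>(u,z). z * mixr u) -` {..x} \<inter> space (\<mu> \<Otimes>\<^sub>M SN) = ?X" by auto
  finally have c1: "cdf (Mix \<mu>) x = measure (\<mu> \<Otimes>\<^sub>M SN) ?X" .
  have "emeasure (\<mu> \<Otimes>\<^sub>M SN) ?X = (\<integral>\<^sup>+u. emeasure SN (Pair u -` ?X) \<partial>\<mu>)"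
    by (rule snd0.emeasure_pair_measure_alt[OF Xm])
  also have "\<dots> = (\<integral>\<^sup>+u. ennreal (mixc x u) \<partial>\<mu>)"
  proof (rule nn_integral_cong)
    fix u assume "u \<in> space \<mu>"
    show "emeasure SN (Pair u -` ?X) = ennreal (mixc x u)"
    proof (cases "0 < u")
      case True
      have "Pair u -` ?X = {..x * sqrt u}" using True
        by (auto simp: mixr_def space_pair_measure field_simps)
      then show ?thesis using True snd0.emeasure_eq_measure
        by (simp add: mixc_def Phi_cdf cdf_def2)
    next
      case False
      show ?thesis
      proof (cases "0 \<le> x")
        case True
        then have "Pair u -` ?X = space SN" using False by (auto simp: mixr_def space_pair_measure)
        then show ?thesis using True False by (metis mixc_def snd0.emeasure_space_1 snd0.space_eq_univ ennreal_1)
      next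
        case False2: False
        have e: "Pair u -` ?X = {}" using False False2 by (auto simp: mixr_def space_pair_measure)
        show ?thesis unfolding e using False2 False by (simp add: mixc_def)
      qed
    qed
  qed
  also have "\<dots> = ennreal (\<integral>u. mixc x u \<partial>\<mu>)"
    by (rule nn_integral_eq_integral)
       (auto intro!: mu.integrable_const_bound[where B=1] simp: mixc_bnd abs_le_iff)
  finally show ?thesis using c1 
    by (simp add: measure_def integral_nonneg_AE mixc_bnd)
qed

definition mixg :: "real \<Rightarrow> real \<Rightarrow> real" where
  "mixg t u = (if 0 < u then exp (- (t^2) / (2 * u)) else 1)"

lemma mixg_meas[measurable]: "mixg t \<in> borel_measurable borel"
  unfolding mixg_def by measurable

lemma Mix_char:
  assumes "real_distribution \<mu>" shows "char (Mix \<mu>) t = complex_of_real (\<integral>u. mixg t u \<partial>\<mu>)"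
proof -
  interpret mu: real_distribution \<mu> by fact
  interpret sn: real_distribution SN by (rule real_dist_normal_dist)
  interpret pp: pair_prob_space \<mu> SN ..
  have sets_mu[simp]: "sets \<mu> = sets borel" by simp
  let ?f = "\<lambda>p. iexp (t * (snd p * mixr (fst p)))"
  have fm: "?f \<in> borel_measurable (\<mu> \<Otimes>\<^sub>M SN)" by measurable
  have fi: "integrable (\<mu> \<Otimes>\<^sub>M SN) ?f"
    by (rule pp.integrable_const_bound[where B=1]) (auto simp: norm_exp_i_times)
  have "char (Mix \<mu>) t = (\<integral>y. iexp (t * y) \<partial>Mix \<mu>)" by (simp add: char_def)
  also have "\<dots> = (\<integral>p. ?f p \<partial>(\<mu> \<Otimes>\<^sub>M SN))"
    unfolding Mix_def by (subst integral_distr) (auto simp: measurable_split_conv case_prod_beta)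
  also have "\<dots> = (\<integral>u. (\<integral>z. ?f (u,z) \<partial>SN) \<partial>\<mu>)"
    using pp.integral_fst'[OF fi] by simp
  also have "\<dots> = (\<integral>u. complex_of_real (mixg t u) \<partial>\<mu>)"
  proof (rule Bochner_Integration.integral_cong[OF refl])
    fix u
    have "(\<integral>z. ?f (u,z) \<partial>SN) = char SN (t * mixr u)"
      by (simp add: char_def ac_simps)
    also have "\<dots> = complex_of_real (mixg t u)"
      by (simp add: char_std_normal_distribution mixg_def mixr_def power_divide field_simps)
    finally show "(\<integral>z. ?f (u,z) \<partial>SN) = complex_of_real (mixg t u)" .
  qed
  also have "\<dots> = complex_of_real (\<integral>u. mixg t u \<partial>\<mu>)" by simp
  finally show ?thesis .
qed


lemma (in prob_space) sum_decomp:
  fixes N :: "'a \<Rightarrow> nat" and f :: "nat \<Rightarrow> 'a \<Rightarrow> real"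
  assumes Nm: "N \<in> measurable M (count_space UNIV)"
    and fm: "\<And>k. f k \<in> borel_measurable M" and fb: "\<And>k x. \<bar>f k x\<bar> \<le> 1"
  shows "(\<lambda>k. \<integral>x. indicator {x \<in> space M. N x = k} x * f k x \<partial>M) sums (\<integral>x. f (N x) x \<partial>M)"
proof -
  let ?D = "\<lambda>k. {x \<in> space M. N x = k}"
  have Dm: "?D k \<in> sets M" for k using Nm by measurable
  let ?F = "\<lambda>k x. indicator (?D k) x * f k x"
  have Fi: "integrable M (?F k)" for k
    by (rule integrable_const_bound[where B=1]) (use fb Dm fm in \<open>auto simp: indicator_def\<close>)
  have Fs: "\<And>x. x \<in> space M \<Longrightarrow> ?F k x = (if k = N x then f k x else 0)" for k
    by (auto simp: indicator_def)
  have "(\<lambda>k. integral\<^sup>L M (?F k)) sums (\<integral>x. (\<Sum>k. ?F k x) \<partial>M)"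
  proof (rule sums_integral[OF Fi])
    show "AE x in M. summable (\<lambda>k. norm (?F k x))"
    proof (rule AE_I2)
      fix x assume "x \<in> space M"
      then have "(\<lambda>k. norm (?F k x)) = (\<lambda>k. if k = N x then norm (f k x) else 0)"
        using Fs by auto
      then show "summable (\<lambda>k. norm (?F k x))" by simp
    qed
    have ms: "(\<lambda>k. measure M (?D k)) sums measure M (\<Union>k. ?D k)"
      by (rule measure_UNION) (auto simp: disjoint_family_on_def Dm)
    show "summable (\<lambda>k. \<integral>x. norm (?F k x) \<partial>M)"
    proof (rule summable_comparison_test[OF _ sums_summable[OF ms]])
      show "\<exists>N0. \<forall>k\<ge>N0. norm (\<integral>x. norm (?F k x) \<partial>M) \<le> measure M (?D k)"
      proof (intro exI allI impI)
        fix k :: nat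
        have i1: "integrable M (\<lambda>x. norm (?F k x))" using Fi by (rule integrable_norm)
        have i2: "integrable M (\<lambda>x. indicator (?D k) x :: real)"
          using integrable_indicator[of "?D k" M "1::real", OF Dm] by (simp add: less_top[symmetric])
        have "(\<integral>x. norm (?F k x) \<partial>M) \<le> (\<integral>x. indicator (?D k) x \<partial>M)"
          by (rule integral_mono[OF i1 i2]) (use fb in \<open>auto simp: abs_mult split: split_indicator\<close>)
        then show "norm (\<integral>x. norm (?F k x) \<partial>M) \<le> measure M (?D k)"
          using Dm by simp
      qed
    qed
  qed
  also have "(\<integral>x. (\<Sum>k. ?F k x) \<partial>M) = (\<integral>x. f (N x) x \<partial>M)"
  proof (rule Bochner_Integration.integral_cong[OF refl])
    fix x assume "x \<in> space M"
    then have "(\<lambda>k. ?F k x) = (\<lambda>k. if k = N x then f k x else 0)" using Fs by auto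
    then show "(\<Sum>k. ?F k x) = f (N x) x" using sums_single[of "N x" "\<lambda>k. f k x"]
      by (simp add: sums_iff)
  qed
  finally show ?thesis .
qed

lemma sums_abs_le:
  fixes a b :: "nat \<Rightarrow> real"
  assumes "a sums A" "b sums B" "\<And>k. \<bar>a k\<bar> \<le> b k"
  shows "\<bar>A\<bar> \<le> B"
proof -
  have "A \<le> B" by (rule sums_le[OF _ assms(1,2)]) (use assms(3) in \<open>auto simp: abs_le_iff\<close>)
  moreover have "- A \<le> B" by (rule sums_le[OF _ sums_minus[OF assms(1)] assms(2)])
      (use assms(3) in \<open>auto simp: abs_le_iff\<close>)
  ultimately show ?thesis by linarith
qed

lemma lt_to_le_conv:
  fixes F G :: "nat \<Rightarrow> real \<Rightarrow> real"
  assumes monoF: "\<And>k y y'. y \<le> y' \<Longrightarrow> F k y \<le> F k y'"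
    and FG: "\<And>k y. F k y \<le> G k y" and GF: "\<And>k y y'. y < y' \<Longrightarrow> G k y \<le> F k y'"
    and conv: "\<And>y. (\<lambda>k. F k y) \<longlonglongrightarrow> P y" and cont: "\<And>y. isCont P y"
  shows "(\<lambda>k. G k y) \<longlonglongrightarrow> P y"
proof (rule tendstoI)
  fix e :: real assume e: "e > 0"
  obtain d where d: "d > 0" "\<And>z. dist z y < d \<Longrightarrow> dist (P z) (P y) < e/2"
    using cont[of y] e unfolding continuous_at_eps_delta by (metis half_gt_zero)
  have "dist (P (y + d/2)) (P y) < e/2" using d by (auto simp: dist_real_def)
  have ev1: "\<forall>\<^sub>F k in sequentially. dist (F k y) (P y) < e"
    using conv[of y] e by (rule tendstoD)
  have ev2: "\<forall>\<^sub>F k in sequentially. dist (F k (y + d/2)) (P (y + d/2)) < e/2"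
    using conv[of "y + d/2"] e by (intro tendstoD) auto
  show "\<forall>\<^sub>F k in sequentially. dist (G k y) (P y) < e"
    using ev1 ev2
  proof eventually_elim
    case (elim k)
    have "G k y \<le> F k (y + d/2)" using GF d by simp
    moreover have "F k y \<le> G k y" by (rule FG)
    ultimately show ?case using elim \<open>dist (P (y + d/2)) (P y) < e/2\<close>
      unfolding dist_real_def abs_less_iff by linarith
  qed
qed


locale setting =
  fixes M :: "'a measure" and X :: "nat \<Rightarrow> 'a \<Rightarrow> real" and N :: "nat \<Rightarrow> 'a \<Rightarrow> nat"
    and T :: "nat \<Rightarrow> (nat \<Rightarrow> real) \<Rightarrow> real" and \<sigma> \<theta> :: real
  assumes ps: "prob_space M"
    and Xm: "\<And>i. X i \<in> borel_measurable M"
    and Nm: "\<And>n. N n \<in> measurable M (count_space UNIV)"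
    and indep: "\<And>n. prob_space.indep_set M
                 {N n -` A \<inter> space M | A. A \<in> sets (count_space UNIV)}
                 {(\<lambda>\<omega> i. X i \<omega>) -` B \<inter> space M | B. B \<in> sets (PiM UNIV (\<lambda>_::nat. borel))}"
    and Ninf: "\<And>K. (\<lambda>n. measure M {\<omega> \<in> space M. N n \<omega> \<le> K}) \<longlonglongrightarrow> 0"
    and Tm: "\<And>n. T n \<in> borel_measurable (PiM {1..n} (\<lambda>_. borel))"
    and sig: "0 < \<sigma>"
    and asn: "\<And>x. (\<lambda>n. measure M {\<omega> \<in> space M.
              \<sigma> * sqrt (real n) * (T n (restrict (\<lambda>i. X i \<omega>) {1..n}) - \<theta>) < x})
            \<longlonglongrightarrow> std_normal_cdf x"
begin

sublocale prob_space M by (rule ps)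

definition "rX k \<omega> = restrict (\<lambda>i. X i \<omega>) {1..k}"

lemma rX_meas: "rX k \<in> measurable M (PiM {1..k} (\<lambda>_. borel))"
  unfolding rX_def by (intro measurable_restrict Xm)

lemma TrX_meas: "(\<lambda>\<omega>. T k (rX k \<omega>)) \<in> borel_measurable M"
  by (rule measurable_compose[OF rX_meas Tm])

definition "Y n \<omega> = \<sigma> * sqrt (real n) * (T (N n \<omega>) (rX (N n \<omega>) \<omega>) - \<theta>)"
definition "V n \<omega> = real (N n \<omega>) / real n"
definition "H k y = prob {\<omega> \<in> space M. \<sigma> * sqrt (real k) * (T k (rX k \<omega>) - \<theta>) \<le> y}"

lemma Y_meas: "Y n \<in> borel_measurable M"
proof -
  have "(\<lambda>\<omega>. (\<lambda>k \<omega>. \<sigma> * sqrt (real n) * (T k (rX k \<omega>) - \<theta>)) (N n \<omega>) \<omega>) \<in> borel_measurable M"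
    by (rule measurable_compose_countable[OF _ Nm]) (use TrX_meas in measurable)
  then show ?thesis by (simp add: Y_def[abs_def])
qed

lemma V_meas: "V n \<in> borel_measurable M"
proof -
  have "(\<lambda>\<omega>. (\<lambda>k. real k / real n) (N n \<omega>)) \<in> borel_measurable M"
    by (rule measurable_compose[OF Nm]) simp
  then show ?thesis by (simp add: V_def[abs_def])
qed

lemma Dk_meas: "{\<omega> \<in> space M. N n \<omega> = k} \<in> sets M"
  using Nm[of n] by measurable

lemma H_conv: "(\<lambda>k. H k y) \<longlonglongrightarrow> std_normal_cdf y"
proof (rule lt_to_le_conv[where F="\<lambda>k y. prob {\<omega> \<in> space M. \<sigma> * sqrt (real k) * (T k (rX k \<omega>) - \<theta>) < y}" and G=H and P=std_normal_cdf])
  show "\<And>y. isCont std_normal_cdf y" by (rule Phi_isCont)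
  show "\<And>y. (\<lambda>k. prob {\<omega> \<in> space M. \<sigma> * sqrt (real k) * (T k (rX k \<omega>) - \<theta>) < y}) \<longlonglongrightarrow> std_normal_cdf y"
    using asn by (simp add: rX_def)
  fix k y y'
  have ev1: "{\<omega> \<in> space M. \<sigma> * sqrt (real k) * (T k (rX k \<omega>) - \<theta>) < y} \<in> sets M" for y
    using TrX_meas[of k] by measurable
  have ev2: "{\<omega> \<in> space M. \<sigma> * sqrt (real k) * (T k (rX k \<omega>) - \<theta>) \<le> y} \<in> sets M" for y
    using TrX_meas[of k] by measurable
  show "y \<le> y' \<Longrightarrow> prob {\<omega> \<in> space M. \<sigma> * sqrt (real k) * (T k (rX k \<omega>) - \<theta>) < y}
     \<le> prob {\<omega> \<in> space M. \<sigma> * sqrt (real k) * (T k (rX k \<omega>) - \<theta>) < y'}"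
    by (rule finite_measure_mono) (use ev1 in auto)
  show "prob {\<omega> \<in> space M. \<sigma> * sqrt (real k) * (T k (rX k \<omega>) - \<theta>) < y} \<le> H k y"
    unfolding H_def by (rule finite_measure_mono) (use ev2 in auto)
  show "y < y' \<Longrightarrow> H k y \<le> prob {\<omega> \<in> space M. \<sigma> * sqrt (real k) * (T k (rX k \<omega>) - \<theta>) < y'}"
    unfolding H_def by (rule finite_measure_mono) (use ev1 in auto)
qed

lemma H_unif: "e > 0 \<Longrightarrow> \<exists>K. \<forall>k\<ge>K. \<forall>y. \<bar>H k y - std_normal_cdf y\<bar> < e"
proof (rule polya_unif[OF _ _ Phi_isCont Phi_mono Phi_bnd Phi_bot Phi_top H_conv])
  fix k
  have ev2: "{\<omega> \<in> space M. \<sigma> * sqrt (real k) * (T k (rX k \<omega>) - \<theta>) \<le> y} \<in> sets M" for y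
    using TrX_meas[of k] by measurable
  show "mono (H k)" unfolding mono_def H_def
    by (intro allI impI finite_measure_mono) (use ev2 in auto)
  show "0 \<le> H k y \<and> H k y \<le> 1" for y unfolding H_def by simp
qed

end


context setting begin

definition "E n x k = {\<omega> \<in> space M. \<sigma> * sqrt (real n) * (T k (rX k \<omega>) - \<theta>) \<le> x}"
abbreviation "D n k \<equiv> {\<omega> \<in> space M. N n \<omega> = k}"

lemma D_int[simp]: "D n k \<inter> space M = D n k" by auto

lemma E_meas: "E n x k \<in> sets M"
  unfolding E_def using TrX_meas[of k] by measurable

lemma prob_DE: "prob (D n k \<inter> E n x k) = prob (D n k) * prob (E n x k)"
proof (rule indep_setD[OF indep[of n]])
  show "D n k \<in> {N n -` A \<inter> space M | A. A \<in> sets (count_space UNIV)}"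
    by (rule CollectI, rule exI[of _ "{k}"]) auto
  let ?B = "{f \<in> space (PiM UNIV (\<lambda>_::nat. borel)). \<sigma> * sqrt (real n) * (T k (restrict f {1..k}) - \<theta>) \<le> x}"
  have fm: "(\<lambda>f. T k (restrict f {1..k})) \<in> borel_measurable (PiM UNIV (\<lambda>_::nat. borel))"
    by (rule measurable_compose[OF measurable_restrict_subset Tm]) simp
  have Bm: "?B \<in> sets (PiM UNIV (\<lambda>_::nat. borel))" using fm by measurable
  have "E n x k = (\<lambda>\<omega> i. X i \<omega>) -` ?B \<inter> space M"
    by (auto simp: E_def rX_def space_PiM)
  then show "E n x k \<in> {(\<lambda>\<omega> i. X i \<omega>) -` B \<inter> space M | B. B \<in> sets (PiM UNIV (\<lambda>_::nat. borel))}"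
    using Bm by blast
qed

lemma cdf_Y: "(\<lambda>k. prob (D n k) * prob (E n x k)) sums cdf (distr M borel (Y n)) x"
proof -
  have "cdf (distr M borel (Y n)) x = prob (Y n -` {..x} \<inter> space M)"
    unfolding cdf_def2 by (rule measure_distr[OF Y_meas]) simp
  also have "\<dots> = (\<integral>\<omega>. indicator (Y n -` {..x} \<inter> space M) \<omega> \<partial>M)"
    using Y_meas[of n] by simp
  also have "\<dots> = (\<integral>\<omega>. indicator (E n x (N n \<omega>)) \<omega> \<partial>M)"
    by (rule Bochner_Integration.integral_cong[OF refl]) (auto simp: Y_def E_def split: split_indicator)
  finally have c: "cdf (distr M borel (Y n)) x = (\<integral>\<omega>. indicator (E n x (N n \<omega>)) \<omega> \<partial>M)" .
  have "(\<lambda>k. \<integral>\<omega>. (indicator (D n k) \<omega> :: real) * indicator (E n x k) \<omega> \<partial>M) sums (\<integral>\<omega>. indicator (E n x (N n \<omega>)) \<omega> \<partial>M)"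
    by (rule sum_decomp[OF Nm, where f="\<lambda>k \<omega>. indicator (E n x k) \<omega>"]) (use E_meas in auto)
  moreover have "(\<integral>\<omega>. (indicator (D n k) \<omega> :: real) * indicator (E n x k) \<omega> \<partial>M) = prob (D n k) * prob (E n x k)" for k
  proof -
    have "(\<integral>\<omega>. (indicator (D n k) \<omega> :: real) * indicator (E n x k) \<omega> \<partial>M) = (\<integral>\<omega>. indicator (D n k \<inter> E n x k) \<omega> \<partial>M)"
      by (rule Bochner_Integration.integral_cong) (auto split: split_indicator)
    also have "\<dots> = prob (D n k \<inter> E n x k)" using E_meas Dk_meas by simp
    finally show ?thesis using prob_DE by simp
  qed
  ultimately show ?thesis using c by simp
qed

lemma cdf_Mix_sum: "(\<lambda>k. prob (D n k) * mixc x (real k / real n)) sums cdf (Mix (distr M borel (V n))) x"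
proof -
  have rd: "real_distribution (distr M borel (V n))" using V_meas by simp
  have "cdf (Mix (distr M borel (V n))) x = (\<integral>u. mixc x u \<partial>distr M borel (V n))"
    by (rule Mix_cdf[OF rd])
  also have "\<dots> = (\<integral>\<omega>. mixc x (V n \<omega>) \<partial>M)"
    by (rule integral_distr[OF V_meas]) simp
  also have "\<dots> = (\<integral>\<omega>. (\<lambda>k \<omega>. mixc x (real k / real n)) (N n \<omega>) \<omega> \<partial>M)" by (simp add: V_def)
  finally have c: "cdf (Mix (distr M borel (V n))) x = \<dots>" .
  have "(\<lambda>k. \<integral>\<omega>. indicator (D n k) \<omega> * mixc x (real k / real n) \<partial>M) sums (\<integral>\<omega>. (\<lambda>k \<omega>. mixc x (real k / real n)) (N n \<omega>) \<omega> \<partial>M)"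
    by (rule sum_decomp[OF Nm]) (use mixc_bnd in \<open>auto simp: abs_le_iff\<close>)
  moreover have "(\<integral>\<omega>. indicator (D n k) \<omega> * mixc x (real k / real n) \<partial>M) = prob (D n k) * mixc x (real k / real n)" for k
    using Dk_meas by (simp add: Int_absorb2)
  ultimately show ?thesis using c by simp
qed

lemma cdf_approx: "(\<lambda>n. cdf (distr M borel (Y n)) x - cdf (Mix (distr M borel (V n))) x) \<longlonglongrightarrow> 0"
proof (rule tendstoI)
  fix e0 :: real assume e0: "e0 > 0"
  define e where "e = min 1 (e0/3)"
  have e: "e > 0" "e \<le> 1" "3 * e \<le> e0" using e0 by (auto simp: e_def)
  obtain K where K: "\<And>k y. k \<ge> K \<Longrightarrow> \<bar>H k y - std_normal_cdf y\<bar> < e" using H_unif[OF e(1)] by blast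
  have "\<forall>\<^sub>F n in sequentially. prob {\<omega> \<in> space M. N n \<omega> \<le> K} < e"
    using order_tendstoD(2)[OF Ninf[of K] e(1)] .
  moreover have "\<forall>\<^sub>F n in sequentially. n \<ge> 1" by (simp add: eventually_ge_at_top)
  ultimately show "\<forall>\<^sub>F n in sequentially. dist (cdf (distr M borel (Y n)) x - cdf (Mix (distr M borel (V n))) x) 0 < e0"
  proof eventually_elim
    case (elim n)
    let ?w = "\<lambda>k::nat. if k \<le> K then 1 else e"
    have s1: "(\<lambda>k. prob (D n k) * prob (E n x k) - prob (D n k) * mixc x (real k / real n)) sums
        (cdf (distr M borel (Y n)) x - cdf (Mix (distr M borel (V n))) x)"
      by (rule sums_diff[OF cdf_Y cdf_Mix_sum])
    have s2: "(\<lambda>k. \<integral>\<omega>. indicator (D n k) \<omega> * ?w k \<partial>M) sums (\<integral>\<omega>. (\<lambda>k \<omega>. ?w k) (N n \<omega>) \<omega> \<partial>M)"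
      by (rule sum_decomp[OF Nm]) (use e in auto)
    have s2': "(\<lambda>k. prob (D n k) * ?w k) sums (\<integral>\<omega>. ?w (N n \<omega>) \<partial>M)"
      using s2 Dk_meas by (simp add: Int_absorb2)
    have bnd: "\<bar>prob (D n k) * prob (E n x k) - prob (D n k) * mixc x (real k / real n)\<bar> \<le> prob (D n k) * ?w k" for k
    proof -
      have "\<bar>prob (E n x k) - mixc x (real k / real n)\<bar> \<le> ?w k"
      proof (cases "k \<le> K")
        case True
        have w1: "?w k = 1" using True by simp
        show ?thesis unfolding w1 abs_le_iff using mixc_bnd[of x "real k / real n"] prob_le_1[of "E n x k"] measure_nonneg[of M "E n x k"] by linarith
      next
        case False
        then have kpos: "k > 0" by simp
        have n0: "n > 0" using elim by simp
        have "E n x k = {\<omega> \<in> space M. \<sigma> * sqrt (real k) * (T k (rX k \<omega>) - \<theta>) \<le> x * sqrt (real k) / sqrt (real n)}"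
        proof -
          have "\<sigma> * sqrt (real n) * a \<le> x \<longleftrightarrow> \<sigma> * sqrt (real k) * a \<le> x * sqrt (real k) / sqrt (real n)" for a
          proof -
            have pk: "sqrt (real k) > 0" and pn: "sqrt (real n) > 0" using kpos n0 by auto
            have "\<sigma> * sqrt (real n) * a \<le> x \<longleftrightarrow> (\<sigma> * sqrt (real n) * a) * (sqrt (real k) / sqrt (real n)) \<le> x * (sqrt (real k) / sqrt (real n))"
              using pk pn by (intro mult_le_cancel_right_pos[symmetric]) simp
            also have "\<dots> \<longleftrightarrow> \<sigma> * sqrt (real k) * a \<le> x * sqrt (real k) / sqrt (real n)"
              using pn by (simp add: field_simps)
            finally show ?thesis .
          qed
          then show ?thesis unfolding E_def by blast
        qed
        then have "prob (E n x k) = H k (x * sqrt (real k) / sqrt (real n))" by (simp add: H_def)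
        moreover have "mixc x (real k / real n) = std_normal_cdf (x * sqrt (real k) / sqrt (real n))"
          using kpos n0 by (simp add: mixc_def real_sqrt_divide)
        ultimately show ?thesis using K[of k] False by (simp add: less_imp_le)
      qed
      then have "prob (D n k) * \<bar>prob (E n x k) - mixc x (real k / real n)\<bar> \<le> prob (D n k) * ?w k"
        by (rule mult_left_mono) simp
      moreover have "\<bar>prob (D n k) * prob (E n x k) - prob (D n k) * mixc x (real k / real n)\<bar> = prob (D n k) * \<bar>prob (E n x k) - mixc x (real k / real n)\<bar>"
        by (simp add: right_diff_distrib[symmetric] abs_mult)
      ultimately show ?thesis by simp
    qed
    have le1: "\<bar>cdf (distr M borel (Y n)) x - cdf (Mix (distr M borel (V n))) x\<bar> \<le> (\<integral>\<omega>. ?w (N n \<omega>) \<partial>M)"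
      by (rule sums_abs_le[OF s1 s2' bnd])
    have Km: "{\<omega> \<in> space M. N n \<omega> \<le> K} \<in> sets M" using Nm[of n] by measurable
    have wm: "(\<lambda>\<omega>. ?w (N n \<omega>)) \<in> borel_measurable M"
      by (rule measurable_compose[OF Nm]) simp
    have "(\<integral>\<omega>. ?w (N n \<omega>) \<partial>M) \<le> (\<integral>\<omega>. indicator {\<omega> \<in> space M. N n \<omega> \<le> K} \<omega> + e \<partial>M)"
    proof (rule integral_mono)
      show "integrable M (\<lambda>\<omega>. ?w (N n \<omega>))"
        by (rule integrable_const_bound[where B=1]) (use e wm in auto)
      show "integrable M (\<lambda>\<omega>. indicator {\<omega> \<in> space M. N n \<omega> \<le> K} \<omega> + e)"
        using Km integrable_indicator[of "{\<omega> \<in> space M. N n \<omega> \<le> K}" M "1::real", OF Km]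
        by (intro Bochner_Integration.integrable_add) (auto simp: less_top[symmetric])
    qed (use e in \<open>auto split: split_indicator\<close>)
    also have "\<dots> = prob {\<omega> \<in> space M. N n \<omega> \<le> K} + e"
      using Km integrable_indicator[of "{\<omega> \<in> space M. N n \<omega> \<le> K}" M "1::real", OF Km]
      by (subst Bochner_Integration.integral_add) (auto simp: less_top[symmetric] prob_space)
    finally show ?case using le1 elim e by (simp add: dist_real_def)
  qed
qed

end


lemma powr_at_top_pos: assumes "(p::real) > 0" shows "filterlim (\<lambda>x. x powr p) at_top at_top"
proof (subst filterlim_cong[OF refl refl])
  show "LIM x at_top. exp (p * ln x) :> at_top"
    by (rule filterlim_compose[OF exp_at_top filterlim_tendsto_pos_mult_at_top[OF tendsto_const]])
       (simp_all add: ln_at_top assms)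
  show "eventually (\<lambda>x. x powr p = exp (p * ln x)) at_top"
    using eventually_gt_at_top[of 0] by eventually_elim (simp add: powr_def)
qed

lemma laplace_lim0:
  assumes "0 < d" "0 < (v::real)" shows "((\<lambda>s::real. (1 + s powr d) powr (- v)) \<longlongrightarrow> 0) at_top"
proof (rule tendsto_neg_powr)
  show "- v < 0" using assms by simp
  show "LIM x at_top. 1 + x powr d :> at_top"
    by (rule filterlim_tendsto_add_at_top[OF tendsto_const powr_at_top_pos[OF assms(1)]])
qed

context
  fixes G :: "real measure" and d v :: real
  assumes gml: "is_gml_law d v G" and d: "0 < d" and v: "0 < v"
begin

lemma G_rd: "real_distribution G" using gml by (simp add: is_gml_law_def)

interpretation G: real_distribution G by (rule G_rd)

lemma G_nonneg: "AE x in G. 0 \<le> x" using gml by (simp add: is_gml_law_def)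

lemma G_lap: "s \<ge> 0 \<Longrightarrow> (\<integral>x. exp (- s * x) \<partial>G) = (1 + s powr d) powr (- v)"
  using gml by (simp add: is_gml_law_def)

lemma G_lap_int: "integrable G (\<lambda>x. exp (- s * x))" if "s \<ge> 0"
proof (rule G.integrable_const_bound[where B=1])
  show "AE x in G. norm (exp (- s * x)) \<le> 1"
    using G_nonneg by eventually_elim (use that in \<open>auto intro: mult_nonneg_nonneg\<close>)
qed simp

lemma G0: "measure G {0} = 0"
proof -
  have le: "measure G {0} \<le> (1 + s powr d) powr (- v)" if s: "s \<ge> 0" for s
  proof -
    have "measure G {0} = (\<integral>x. indicator {0} x \<partial>G)" by simp
    also have "\<dots> \<le> (\<integral>x. exp (- s * x) \<partial>G)"
      by (rule integral_mono[OF _ G_lap_int[OF s]])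
         (auto split: split_indicator intro: G.integrable_const_bound[where B=1])
    finally show ?thesis using G_lap[OF s] by simp
  qed
  have "measure G {0} \<le> 0"
    by (rule tendsto_le[OF trivial_limit_at_top_linorder laplace_lim0[OF d v] tendsto_const])
       (use eventually_ge_at_top[of "0::real"] in \<open>rule eventually_mono, use le in blast\<close>)
  then show ?thesis using measure_nonneg[of G "{0}"] by linarith
qed

lemma G_pos: "AE x in G. 0 < x"
proof -
  have "AE x in G. x \<noteq> 0"
    by (rule AE_I[where N="{0}"]) (auto simp: G.emeasure_eq_measure G0)
  then show ?thesis using G_nonneg by eventually_elim auto
qed

definition "Ulaw = distr G borel (\<lambda>m. 1 / (2 * m))"

lemma U_rd: "real_distribution Ulaw"
  unfolding Ulaw_def by (rule G.real_distribution_distr) simp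

lemma U_nonpos: "measure Ulaw {..0} = 0"
proof -
  have Am: "(\<lambda>m. 1 / (2 * m)) -` {..0} \<inter> space G \<in> sets G"
    by (rule measurable_sets[where A=borel]) auto
  have "measure Ulaw {..0} = measure G ((\<lambda>m. 1 / (2 * m)) -` {..0} \<inter> space G)"
    unfolding Ulaw_def by (rule measure_distr) auto
  also have "\<dots> = measure G {}"
    by (rule measure_eq_AE[OF _ Am]) (use G_pos in \<open>auto elim: eventually_mono\<close>)
  also have "\<dots> = 0" by simp
  finally show ?thesis .
qed

lemma U_atom0: "measure Ulaw {0} = 0"
proof -
  interpret U: real_distribution Ulaw by (rule U_rd)
  have "measure Ulaw {0} \<le> measure Ulaw {..0}" by (rule U.finite_measure_mono) auto
  then show ?thesis using U_nonpos measure_nonneg[of Ulaw "{0}"] by linarith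
qed

lemma U_mixg: "(\<integral>u. mixg t u \<partial>Ulaw) = (1 + (t^2) powr d) powr (- v)"
proof -
  have "(\<integral>u. mixg t u \<partial>Ulaw) = (\<integral>m. mixg t (1 / (2 * m)) \<partial>G)"
    unfolding Ulaw_def by (rule integral_distr) auto
  also have "\<dots> = (\<integral>m. exp (- (t^2) * m) \<partial>G)"
  proof (rule integral_cong_AE)
    show "AE m in G. mixg t (1 / (2 * m)) = exp (- (t^2) * m)"
      using G_pos by eventually_elim (simp add: mixg_def)
  qed auto
  also have "\<dots> = (1 + (t^2) powr d) powr (- v)" by (rule G_lap) simp
  finally show ?thesis .
qed

end


lemma rd_integrable_bounded:
  fixes g :: "real \<Rightarrow> real" and B :: real
  assumes "real_distribution \<mu>" "g \<in> borel_measurable borel" "\<And>x. \<bar>g x\<bar> \<le> B"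
  shows "integrable \<mu> g"
proof -
  interpret real_distribution \<mu> by fact
  show ?thesis by (rule integrable_const_bound[where B=B]) (use assms in auto)
qed

lemma moments_conv_integral:
  fixes \<mu> :: "nat \<Rightarrow> real measure" and w f :: "real \<Rightarrow> real"
  assumes rd: "\<And>n. real_distribution (\<mu> n)" and rd0: "real_distribution \<mu>0"
    and wm: "w \<in> borel_measurable borel" and wb: "\<And>x. 0 \<le> w x \<and> w x \<le> 1"
    and mom: "\<And>k. (\<lambda>n. \<integral>x. w x ^ k \<partial>\<mu> n) \<longlonglongrightarrow> (\<integral>x. w x ^ k \<partial>\<mu>0)"
    and f: "\<And>y. isCont f y"
  shows "(\<lambda>n. \<integral>x. f (w x) \<partial>\<mu> n) \<longlonglongrightarrow> (\<integral>x. f (w x) \<partial>\<mu>0)"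
proof (rule tendstoI)
  fix e :: real assume e: "e > 0"
  have fcont: "continuous_on UNIV f" by (intro continuous_at_imp_continuous_on) (auto intro: f)
  have fm: "f \<in> borel_measurable borel" using fcont by (rule borel_measurable_continuous_onI)
  have "compact (f ` {0..1})" by (rule compact_continuous_image) (use fcont in \<open>auto intro: continuous_on_subset\<close>)
  from compact_imp_bounded[OF this] obtain B where "\<forall>z\<in>f ` {0..1}. norm z \<le> B"
    by (auto simp: bounded_iff)
  then have B: "\<And>y. y \<in> {0..1} \<Longrightarrow> \<bar>f y\<bar> \<le> B" by auto
  obtain g where g: "real_polynomial_function g" and fg: "\<And>y. y \<in> {0..1} \<Longrightarrow> \<bar>f y - g y\<bar> < e/3"
    by (rule Stone_Weierstrass_real_polynomial_function[of "{0..1::real}" f "e/3"])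
       (use e fcont in \<open>auto intro: continuous_on_subset\<close>)
  obtain a m where gsum: "g = (\<lambda>y. \<Sum>i\<le>m. a i * y ^ i)"
    using real_polynomial_function_imp_sum[OF g] by blast
  have wmk: "(\<lambda>x. w x ^ k) \<in> borel_measurable borel" for k using wm by measurable
  have powint: "integrable \<nu> (\<lambda>x. w x ^ k)" if "real_distribution \<nu>" for \<nu> k
    by (rule rd_integrable_bounded[OF that wmk, where B=1]) (use wb in \<open>auto intro: power_le_one\<close>)
  have gint: "(\<integral>x. g (w x) \<partial>\<nu>) = (\<Sum>i\<le>m. a i * (\<integral>x. w x ^ i \<partial>\<nu>))" if "real_distribution \<nu>" for \<nu>
    unfolding gsum by (subst Bochner_Integration.integral_sum) (auto intro!: integrable_mult_right powint[OF that])
  have gconv: "(\<lambda>n. \<integral>x. g (w x) \<partial>\<mu> n) \<longlonglongrightarrow> (\<integral>x. g (w x) \<partial>\<mu>0)"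
    unfolding gint[OF rd] gint[OF rd0] by (intro tendsto_sum tendsto_mult_left mom)
  have gm: "(\<lambda>x. g (w x)) \<in> borel_measurable borel" unfolding gsum using wm by measurable
  have gwb: "\<bar>g (w x)\<bar> \<le> B + e/3" for x
  proof -
    have "w x \<in> {0..1}" using wb[of x] by auto
    then have "\<bar>f (w x)\<bar> \<le> B" "\<bar>f (w x) - g (w x)\<bar> < e/3" using B fg by auto
    then show ?thesis unfolding abs_le_iff abs_less_iff by linarith
  qed
  have fwb: "\<bar>f (w x)\<bar> \<le> B" for x using B[of "w x"] wb[of x] by auto
  have fwm: "(\<lambda>x. f (w x)) \<in> borel_measurable borel" using fm wm by measurable
  have close: "\<bar>(\<integral>x. f (w x) \<partial>\<nu>) - (\<integral>x. g (w x) \<partial>\<nu>)\<bar> \<le> e/3" if nu: "real_distribution \<nu>" for \<nu>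
  proof -
    interpret nu: real_distribution \<nu> by (rule nu)
    have i1: "integrable \<nu> (\<lambda>x. f (w x))" by (rule rd_integrable_bounded[OF nu fwm fwb])
    have i2: "integrable \<nu> (\<lambda>x. g (w x))" by (rule rd_integrable_bounded[OF nu gm gwb])
    have "\<bar>(\<integral>x. f (w x) \<partial>\<nu>) - (\<integral>x. g (w x) \<partial>\<nu>)\<bar> = \<bar>\<integral>x. f (w x) - g (w x) \<partial>\<nu>\<bar>"
      using i1 i2 by simp
    also have "\<dots> \<le> (\<integral>x. \<bar>f (w x) - g (w x)\<bar> \<partial>\<nu>)" by (rule integral_abs_bound)
    also have "\<dots> \<le> (\<integral>x. e/3 \<partial>\<nu>)"
      by (rule integral_mono) (use i1 i2 fg wb in \<open>auto intro: less_imp_le\<close>)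
    also have "\<dots> = e/3" using nu.prob_space by simp
    finally show ?thesis .
  qed
  have "\<forall>\<^sub>F n in sequentially. dist (\<integral>x. g (w x) \<partial>\<mu> n) (\<integral>x. g (w x) \<partial>\<mu>0) < e/3"
    using gconv e by (intro tendstoD) auto
  then show "\<forall>\<^sub>F n in sequentially. dist (\<integral>x. f (w x) \<partial>\<mu> n) (\<integral>x. f (w x) \<partial>\<mu>0) < e"
  proof eventually_elim
    case (elim n)
    then show ?case using close[OF rd[of n]] close[OF rd0] e
      unfolding dist_real_def abs_le_iff abs_less_iff by linarith
  qed
qed

lemma weak_from_moments:
  fixes \<mu> :: "nat \<Rightarrow> real measure" and w :: "real \<Rightarrow> real"
  assumes rd: "\<And>n. real_distribution (\<mu> n)" and rd0: "real_distribution \<mu>0"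
    and wm: "w \<in> borel_measurable borel" and wb: "\<And>x. 0 \<le> w x \<and> w x \<le> 1"
    and mom: "\<And>k. (\<lambda>n. \<integral>x. w x ^ k \<partial>\<mu> n) \<longlonglongrightarrow> (\<integral>x. w x ^ k \<partial>\<mu>0)"
  shows "weak_conv_m (\<lambda>n. distr (\<mu> n) borel w) (distr \<mu>0 borel w)"
proof (rule integral_bdd_continuous_conv_imp_weak_conv)
  show "real_distribution (distr (\<mu> n) borel w)" for n
  proof -
    interpret real_distribution "\<mu> n" by (rule rd)
    show ?thesis using wm by simp
  qed
  show "real_distribution (distr \<mu>0 borel w)"
  proof -
    interpret real_distribution "\<mu>0" by (rule rd0)
    show ?thesis using wm by simp
  qed
  fix f :: "real \<Rightarrow> real" assume f: "\<And>x. isCont f x" "\<And>x. \<bar>f x\<bar> \<le> 1"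
  have fm: "f \<in> borel_measurable borel"
    by (intro borel_measurable_continuous_onI continuous_at_imp_continuous_on) (auto intro: f)
  have eq: "(\<integral>x. f x \<partial>distr \<nu> borel w) = (\<integral>x. f (w x) \<partial>\<nu>)" if nu: "real_distribution \<nu>" for \<nu>
  proof -
    interpret real_distribution \<nu> by (rule nu)
    have "w \<in> borel_measurable \<nu>" using wm by simp
    then show ?thesis by (rule integral_distr[OF _ fm])
  qed
  show "(\<lambda>n. \<integral>x. f x \<partial>distr (\<mu> n) borel w) \<longlonglongrightarrow> (\<integral>x. f x \<partial>distr \<mu>0 borel w)"
    unfolding eq[OF rd] eq[OF rd0] by (rule moments_conv_integral[OF rd rd0 wm wb mom f(1)])
qed


definition hh :: "real \<Rightarrow> real" where "hh x = (if 0 < x then exp (- 1 / x) else 0)"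

lemma hh_meas[measurable]: "hh \<in> borel_measurable borel" unfolding hh_def by measurable

lemma hh_bnd: "0 \<le> hh x \<and> hh x \<le> 1" by (auto simp: hh_def)

lemma hh_pos: "0 < x \<Longrightarrow> 0 < hh x" by (simp add: hh_def)

lemma hh_le_iff: assumes "0 < x" shows "hh u \<le> hh x \<longleftrightarrow> u \<le> x"
proof (cases "0 < u")
  case True
  then show ?thesis using assms by (simp add: hh_def divide_le_cancel) (auto simp: field_simps)
next
  case False
  then show ?thesis using assms hh_pos[OF assms] by (simp add: hh_def)
qed

lemma hh_eq_iff: assumes "0 < x" shows "hh u = hh x \<longleftrightarrow> u = x"
  using hh_le_iff[OF assms, of u] hh_le_iff[of u x] assms
  by (metis hh_le_iff nle_le order.strict_trans1 hh_pos not_le hh_def less_irrefl)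

lemma weak_conv_from_h:
  assumes rdn: "\<And>n. real_distribution (\<nu> n)" and rdU: "real_distribution U"
    and nonpos: "(\<lambda>n. measure (\<nu> n) {..0}) \<longlonglongrightarrow> 0" and U0: "measure U {..0} = 0"
    and mom: "\<And>k. (\<lambda>n. \<integral>x. hh x ^ k \<partial>\<nu> n) \<longlonglongrightarrow> (\<integral>x. hh x ^ k \<partial>U)"
  shows "weak_conv_m \<nu> U"
  unfolding weak_conv_m_def weak_conv_def
proof (intro allI impI)
  fix x assume cx: "isCont (cdf U) x"
  interpret U: real_distribution U by (rule rdU)
  have wc: "weak_conv_m (\<lambda>n. distr (\<nu> n) borel hh) (distr U borel hh)"
    by (rule weak_from_moments[OF rdn rdU hh_meas hh_bnd mom])
  show "(\<lambda>n. cdf (\<nu> n) x) \<longlonglongrightarrow> cdf U x"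
  proof (cases "x \<le> 0")
    case True
    have "cdf U x \<le> measure U {..0}" unfolding cdf_def2 by (rule U.finite_measure_mono) (use True in auto)
    then have cU: "cdf U x = 0" using U0 U.cdf_nonneg[of x] by simp
    have "(\<lambda>n. cdf (\<nu> n) x) \<longlonglongrightarrow> 0"
    proof (rule tendsto_sandwich[OF _ _ tendsto_const nonpos])
      show "\<forall>\<^sub>F n in sequentially. 0 \<le> cdf (\<nu> n) x"
        by (intro always_eventually allI) (simp add: cdf_def2)
      show "\<forall>\<^sub>F n in sequentially. cdf (\<nu> n) x \<le> measure (\<nu> n) {..0}"
      proof (intro always_eventually allI)
        fix n
        interpret nu: real_distribution "\<nu> n" by (rule rdn)
        show "cdf (\<nu> n) x \<le> measure (\<nu> n) {..0}" unfolding cdf_def2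
          by (rule nu.finite_measure_mono) (use True in auto)
      qed
    qed
    then show ?thesis using cU by simp
  next
    case False
    then have xp: "0 < x" by simp
    have pre: "hh -` {..hh x} = {..x}" using hh_le_iff[OF xp] by auto
    have cdf_eq: "cdf (distr \<mu> borel hh) (hh x) = cdf \<mu> x" if mu: "real_distribution \<mu>" for \<mu>
    proof -
      interpret mu: real_distribution \<mu> by (rule mu)
      have "cdf (distr \<mu> borel hh) (hh x) = measure \<mu> (hh -` {..hh x} \<inter> space \<mu>)"
        unfolding cdf_def2 by (rule measure_distr) auto
      then show ?thesis by (simp add: pre cdf_def2)
    qed
    have "measure (distr U borel hh) {hh x} = measure U (hh -` {hh x} \<inter> space U)"
      by (rule measure_distr) auto
    also have "hh -` {hh x} \<inter> space U = {x}" using hh_eq_iff[OF xp] by auto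
    also have "measure U {x} = 0" using cx U.isCont_cdf by simp
    finally have m0: "measure (distr U borel hh) {hh x} = 0" .
    interpret Uh: real_distribution "distr U borel hh" by simp
    have "isCont (cdf (distr U borel hh)) (hh x)" using Uh.isCont_cdf m0 by simp
    then have "(\<lambda>n. cdf (distr (\<nu> n) borel hh) (hh x)) \<longlonglongrightarrow> cdf (distr U borel hh) (hh x)"
      using wc unfolding weak_conv_m_def weak_conv_def by blast
    then show ?thesis using cdf_eq[OF rdn] cdf_eq[OF rdU] by simp
  qed
qed

lemma mixg_hh: "0 < k \<Longrightarrow> mixg (sqrt (2 * real k)) x = hh x ^ k + indicator {..0} x"
proof (cases "0 < x")
  case True
  assume k: "0 < k"
  have "mixg (sqrt (2 * real k)) x = exp (real k * (- 1 / x))"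
    using True by (simp add: mixg_def)
  also have "\<dots> = exp (- 1 / x) ^ k" by (rule exp_of_nat_mult)
  also have "\<dots> = hh x ^ k" using True by (simp add: hh_def)
  finally show ?thesis using True by simp
next
  case False
  assume "0 < k"
  then show ?thesis using False by (simp add: mixg_def hh_def)
qed

lemma mixg_isCont: "x \<noteq> 0 \<Longrightarrow> isCont (mixg t) x"
proof (cases "0 < x")
  case True
  have ev: "eventually (\<lambda>y. mixg t y = exp (- (t^2) / (2 * y))) (nhds x)"
    using eventually_nhds_in_open[of "{0<..}" x] True by (auto elim!: eventually_mono simp: mixg_def)
  have c: "isCont (\<lambda>y. exp (- (t^2) / (2 * y))) x" using True by (intro continuous_intros) auto
  show ?thesis using isCont_cong[OF ev] c by simp
next
  case False
  assume "x \<noteq> 0"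
  then have xn: "x < 0" using False by simp
  have "eventually (\<lambda>y. mixg t y = 1) (nhds x)"
    by (rule eventually_mono[OF eventually_nhds_in_open[of "{..<0}" x]]) (use xn in \<open>auto simp: mixg_def\<close>)
  then show ?thesis using isCont_cong[of "mixg t" "\<lambda>_. 1"] by simp
qed

lemma mixg_bnd: "\<bar>mixg t x\<bar> \<le> 1" by (auto simp: mixg_def)


lemma abs_powr_eq: "(t^2) powr (a/2) = \<bar>t\<bar> powr (a::real)"
proof (cases "t = 0")
  case True then show ?thesis by simp
next
  case False
  have e: "t^2 = \<bar>t\<bar> powr 2" using False by (simp add: powr_realpow)
  have "(t^2) powr (a/2) = (\<bar>t\<bar> powr 2) powr (a/2)" by (subst e) (rule refl)
  also have "\<dots> = \<bar>t\<bar> powr (2 * (a/2))" by (rule powr_powr)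
  finally show ?thesis by simp
qed

lemma integral_hh_pow:
  assumes rd: "real_distribution \<mu>" and k: "0 < k"
  shows "(\<integral>x. hh x ^ k \<partial>\<mu>) = (\<integral>x. mixg (sqrt (2 * real k)) x \<partial>\<mu>) - measure \<mu> {..0}"
proof -
  interpret real_distribution \<mu> by (rule rd)
  have i1: "integrable \<mu> (mixg (sqrt (2 * real k)))"
    by (rule integrable_const_bound[where B=1]) (auto simp: mixg_bnd)
  have i2: "integrable \<mu> (\<lambda>x. indicator {..0::real} x :: real)"
    by (rule integrable_const_bound[where B=1]) auto
  have "(\<integral>x. hh x ^ k \<partial>\<mu>) = (\<integral>x. mixg (sqrt (2 * real k)) x - indicator {..0} x \<partial>\<mu>)"
    using mixg_hh[OF k] by simp
  also have "\<dots> = (\<integral>x. mixg (sqrt (2 * real k)) x \<partial>\<mu>) - (\<integral>x. indicator {..0::real} x \<partial>\<mu>)"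
    by (rule Bochner_Integration.integral_diff[OF i1 i2])
  finally show ?thesis by simp
qed

theorem theorem8:
  fixes M :: "'a measure"
    and X :: "nat \<Rightarrow> 'a \<Rightarrow> real"
    and N :: "nat \<Rightarrow> 'a \<Rightarrow> nat"
    and T :: "nat \<Rightarrow> (nat \<Rightarrow> real) \<Rightarrow> real"
    and \<alpha> \<nu> \<sigma> \<theta> :: real
    and L G :: "real measure"
  assumes "prob_space M"
    and "0 < \<alpha>" "\<alpha> \<le> 2" "0 < \<nu>"
    and "\<And>i. X i \<in> borel_measurable M"
    and "\<And>n. N n \<in> measurable M (count_space UNIV)"
    and "\<And>n. prob_space.indep_set M
                 {N n -` A \<inter> space M | A. A \<in> sets (count_space UNIV)}
                 {(\<lambda>\<omega> i. X i \<omega>) -` B \<inter> space M | B. B \<in> sets (PiM UNIV (\<lambda>_::nat. borel))}"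
    and "\<And>K. (\<lambda>n. measure M {\<omega> \<in> space M. N n \<omega> \<le> K}) \<longlonglongrightarrow> 0"
    and "\<And>n. T n \<in> borel_measurable (PiM {1..n} (\<lambda>_. borel))"
    and "0 < \<sigma>"
    and "\<And>x. (\<lambda>n. measure M {\<omega> \<in> space M.
              \<sigma> * sqrt (real n) * (T n (restrict (\<lambda>i. X i \<omega>) {1..n}) - \<theta>) < x})
            \<longlonglongrightarrow> std_normal_cdf x"
    and "is_linnik_law \<alpha> \<nu> L"
    and "is_gml_law (\<alpha> / 2) \<nu> G"
  shows "weak_conv_m
           (\<lambda>n. distr M borel (\<lambda>\<omega>. \<sigma> * sqrt (real n) *
              (T (N n \<omega>) (restrict (\<lambda>i. X i \<omega>) {1..N n \<omega>}) - \<theta>)))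
           L
         \<longleftrightarrow>
         weak_conv_m
           (\<lambda>n. distr M borel (\<lambda>\<omega>. real (N n \<omega>) / real n))
           (distr G borel (\<lambda>m. 1 / (2 * m)))"
proof -
  interpret S: setting M X N T \<sigma> \<theta>
    by (rule setting.intro[OF assms(1,5-11)])
  have d: "0 < \<alpha> / 2" using assms(2) by simp
  note gml = assms(13)
  have Yeq: "(\<lambda>\<omega>. \<sigma> * sqrt (real n) * (T (N n \<omega>) (restrict (\<lambda>i. X i \<omega>) {1..N n \<omega>}) - \<theta>)) = S.Y n" for n
    by (simp add: fun_eq_iff S.Y_def S.rX_def)
  have Veq: "(\<lambda>\<omega>. real (N n \<omega>) / real n) = S.V n" for n
    by (simp add: fun_eq_iff S.V_def)
  define U where "U = distr G borel (\<lambda>m. 1 / (2 * m))"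
  have UU: "U = Ulaw G" by (simp add: U_def Ulaw_def[OF gml d assms(4)])
  define A where "A n = distr M borel (S.Y n)" for n
  define nu where "nu n = distr M borel (S.V n)" for n
  define Mx where "Mx n = Mix (nu n)" for n
  define phi where "phi t = (1 + \<bar>t\<bar> powr \<alpha>) powr (- \<nu>)" for t
  have rdA: "real_distribution (A n)" for n unfolding A_def using S.Y_meas by simp
  have rdnu: "real_distribution (nu n)" for n unfolding nu_def using S.V_meas by simp
  have rdMx: "real_distribution (Mx n)" for n unfolding Mx_def by (rule Mix_real_distribution[OF rdnu])
  have rdL: "real_distribution L" using assms(12) by (simp add: is_linnik_law_def)
  have charL: "char L t = complex_of_real (phi t)" for t
    using assms(12) by (simp add: is_linnik_law_def phi_def)
  have rdU: "real_distribution U" unfolding UU by (rule U_rd[OF gml d assms(4)])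
  have Umixg: "(\<integral>u. mixg t u \<partial>U) = phi t" for t
    unfolding UU U_mixg[OF gml d assms(4)] phi_def abs_powr_eq ..
  have U0: "measure U {..0} = 0" unfolding UU by (rule U_nonpos[OF gml d assms(4)])
  have Uat: "measure U {0} = 0" unfolding UU by (rule U_atom0[OF gml d assms(4)])

  have step1: "weak_conv_m A L \<longleftrightarrow> weak_conv_m Mx L"
  proof -
    have "(\<lambda>n. cdf (A n) x) \<longlonglongrightarrow> c \<longleftrightarrow> (\<lambda>n. cdf (Mx n) x) \<longlonglongrightarrow> c" for x c
    proof -
      have D: "(\<lambda>n. cdf (A n) x - cdf (Mx n) x) \<longlonglongrightarrow> 0"
        using S.cdf_approx[of x] by (simp add: A_def Mx_def nu_def)
      show ?thesis
      proof
        assume "(\<lambda>n. cdf (A n) x) \<longlonglongrightarrow> c"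
        from tendsto_diff[OF this D] show "(\<lambda>n. cdf (Mx n) x) \<longlonglongrightarrow> c" by simp
      next
        assume "(\<lambda>n. cdf (Mx n) x) \<longlonglongrightarrow> c"
        from tendsto_add[OF this D] show "(\<lambda>n. cdf (A n) x) \<longlonglongrightarrow> c" by simp
      qed
    qed
    then show ?thesis unfolding weak_conv_m_def weak_conv_def by blast
  qed

  have step2: "weak_conv_m Mx L \<longleftrightarrow> (\<forall>t. (\<lambda>n. \<integral>u. mixg t u \<partial>nu n) \<longlonglongrightarrow> phi t)"
  proof -
    have cM: "char (Mx n) t = complex_of_real (\<integral>u. mixg t u \<partial>nu n)" for n t
      unfolding Mx_def by (rule Mix_char[OF rdnu])
    show ?thesis
    proof
      assume wc: "weak_conv_m Mx L"
      show "\<forall>t. (\<lambda>n. \<integral>u. mixg t u \<partial>nu n) \<longlonglongrightarrow> phi t"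
      proof
        fix t
        from levy_continuity1[OF rdMx rdL wc, of t]
        show "(\<lambda>n. \<integral>u. mixg t u \<partial>nu n) \<longlonglongrightarrow> phi t"
          unfolding cM charL tendsto_of_real_iff .
      qed
    next
      assume h: "\<forall>t. (\<lambda>n. \<integral>u. mixg t u \<partial>nu n) \<longlonglongrightarrow> phi t"
      show "weak_conv_m Mx L"
      proof (rule levy_continuity[OF rdMx rdL])
        fix t show "(\<lambda>n. char (Mx n) t) \<longlonglongrightarrow> char L t"
          unfolding cM charL tendsto_of_real_iff using h by blast
      qed
    qed
  qed

  have nonpos: "(\<lambda>n. measure (nu n) {..0}) \<longlonglongrightarrow> 0"
  proof (rule tendsto_sandwich[OF _ _ tendsto_const S.Ninf[of 0]])
    show "\<forall>\<^sub>F n in sequentially. 0 \<le> measure (nu n) {..0}" by simp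
    show "\<forall>\<^sub>F n in sequentially. measure (nu n) {..0} \<le> measure M {\<omega> \<in> space M. N n \<omega> \<le> 0}"
      using eventually_ge_at_top[of "1::nat"]
    proof eventually_elim
      case (elim n)
      have "measure (nu n) {..0} = measure M (S.V n -` {..0} \<inter> space M)"
        unfolding nu_def by (rule measure_distr[OF S.V_meas]) simp
      also have "\<dots> \<le> measure M {\<omega> \<in> space M. N n \<omega> \<le> 0}"
      proof (rule S.finite_measure_mono)
        show "S.V n -` {..0} \<inter> space M \<subseteq> {\<omega> \<in> space M. N n \<omega> \<le> 0}"
          using elim by (auto simp: S.V_def divide_le_0_iff)
        show "{\<omega> \<in> space M. N n \<omega> \<le> 0} \<in> sets M" using assms(6)[of n] by measurable
      qed
      finally show ?case .
    qed
  qed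

  have step3: "(\<forall>t. (\<lambda>n. \<integral>u. mixg t u \<partial>nu n) \<longlonglongrightarrow> phi t) \<longleftrightarrow> weak_conv_m nu U"
  proof
    assume wc: "weak_conv_m nu U"
    show "\<forall>t. (\<lambda>n. \<integral>u. mixg t u \<partial>nu n) \<longlonglongrightarrow> phi t"
    proof
      fix t
      have "(\<lambda>n. \<integral>u. mixg t u \<partial>nu n) \<longlonglongrightarrow> (\<integral>u. mixg t u \<partial>U)"
      proof (rule weak_conv_imp_bdd_ae_continuous_conv[OF rdnu rdU wc, where B=1])
        interpret U: real_distribution U by (rule rdU)
        have "emeasure U {x. \<not> isCont (mixg t) x} \<le> emeasure U {0}"
          by (rule emeasure_mono) (use mixg_isCont in auto)
        also have "\<dots> = 0" using Uat by (simp add: U.emeasure_eq_measure)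
        finally show "emeasure U {x. \<not> isCont (mixg t) x} = 0" by simp
      qed (auto simp: mixg_bnd)
      then show "(\<lambda>n. \<integral>u. mixg t u \<partial>nu n) \<longlonglongrightarrow> phi t" using Umixg by simp
    qed
  next
    assume h: "\<forall>t. (\<lambda>n. \<integral>u. mixg t u \<partial>nu n) \<longlonglongrightarrow> phi t"
    show "weak_conv_m nu U"
    proof (rule weak_conv_from_h[OF rdnu rdU nonpos U0])
      fix k :: nat
      show "(\<lambda>n. \<integral>x. hh x ^ k \<partial>nu n) \<longlonglongrightarrow> (\<integral>x. hh x ^ k \<partial>U)"
      proof (cases "k = 0")
        case True
        have one: "(\<integral>x. hh x ^ k \<partial>\<mu>) = 1" if "real_distribution \<mu>" for \<mu>
        proof -
          interpret real_distribution \<mu> by (rule that)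
          have "prob UNIV = 1" by (metis prob_space space_eq_univ)
          then show ?thesis using True by simp
        qed
        have "(\<integral>x. hh x ^ k \<partial>nu n) = 1" for n by (rule one[OF rdnu])
        moreover have "(\<integral>x. hh x ^ k \<partial>U) = 1" by (rule one[OF rdU])
        ultimately show ?thesis by simp
      next
        case False
        then have k: "0 < k" by simp
        have "(\<lambda>n. (\<integral>x. mixg (sqrt (2 * real k)) x \<partial>nu n) - measure (nu n) {..0})
              \<longlonglongrightarrow> phi (sqrt (2 * real k)) - 0"
          by (intro tendsto_diff nonpos) (use h in blast)
        then show ?thesis
          unfolding integral_hh_pow[OF rdnu k] integral_hh_pow[OF rdU k] U0 Umixg by simp
      qed
    qed
  qed
  show ?thesis
    unfolding Yeq Veq U_def[symmetric] A_def[symmetric] nu_def[symmetric]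
    using step1 step2 step3 by blast
qed


end
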